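(* $\mathrm{Aut}(Q_D,\mathbb Z)\subseteq J_0\,O(3,1;\mathbb Z)\,J_0^{-1}$, where $J_0=\frac12\begin{pmatrix}1&1&1&1\\1&1&-1&-1\\1&-1&1&-1\\1&-1&-1&1\end{pmatrix}$; that is, for every $U\in\mathrm{Aut}(Q_D,\mathbb Z)$ the matrix $J_0^{-1}UJ_0$ has integer entries (and then lies in $O(3,1;\mathbb Z)$).
   Context: Let $Q_D=I-\frac12\mathbf 1\mathbf 1^T$ (where $\mathbf 1=(1,1,1,1)^T$) and $\mathrm{Aut}(Q_D,\mathbb Z)=\{U\in M_4(\mathbb Z): U^TQ_DU=Q_D\}$. Let $Q_L=\mathrm{diag}(-1,1,1,1)$ and $O(3,1;\mathbb Z)=\{U\in M_4(\mathbb Z):U^TQ_LU=Q_L\}$. Note $J_0=J_0^T=J_0^{-1}$. *)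

theory Defs
  imports "HOL-Analysis.Analysis"
begin

definition int_matrix :: "real^4^4 \<Rightarrow> bool" where
  "int_matrix U \<longleftrightarrow> (\<forall>i j. U $ i $ j \<in> \<int>)"

definition Q_D :: "real^4^4" where
  "Q_D = (\<chi> i j. (if i = j then 1 else 0) - 1/2)"

definition Q_L :: "real^4^4" where
  "Q_L = (\<chi> i j. if i = j then (if i = 1 then -1 else 1) else 0)"

definition Aut_QD_Z :: "(real^4^4) set" where
  "Aut_QD_Z = {U. int_matrix U \<and> transpose U ** Q_D ** U = Q_D}"

definition O31_Z :: "(real^4^4) set" where
  "O31_Z = {U. int_matrix U \<and> transpose U ** Q_L ** U = Q_L}"

definition J0 :: "real^4^4" where
  "J0 = (\<chi> i j. (1/2) *
     (if i = 1 \<or> j = 1 then 1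
      else if i = j then 1 else -1))"

end

theory Submission
  imports Defs
begin
definition hd4 :: "4 \<Rightarrow> 4 \<Rightarrow> int" where
  "hd4 i j = (if i = 1 \<or> j = 1 then 1 else if i = j then 1 else -1)"

lemma total:
  fixes a :: "4 \<Rightarrow> 4 \<Rightarrow> int"
  assumes col: "\<And>j k. 2*(\<Sum>i\<in>UNIV. a i j * a i k) - (\<Sum>i\<in>UNIV. a i j)*(\<Sum>i\<in>UNIV. a i k) = (if j=k then 1 else -1)"
  shows "2*(\<Sum>i\<in>UNIV. (\<Sum>j\<in>UNIV. a i j)^2) - (\<Sum>i\<in>UNIV. \<Sum>j\<in>UNIV. a i j)^2 = -8"
proof -
  have h: "2*(\<Sum>i\<in>UNIV. a i j * a i k) = (\<Sum>i\<in>UNIV. a i j)*(\<Sum>i\<in>UNIV. a i k) + (if j=k then 1 else -1)" for j k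
    using col[of j k] by linarith
  have "2*(\<Sum>i\<in>UNIV. (\<Sum>j\<in>UNIV. a i j)^2) = (\<Sum>j\<in>UNIV. \<Sum>k\<in>UNIV. 2*(\<Sum>i\<in>UNIV. a i j * a i k))"
    by (simp add: sum_4 power2_eq_square algebra_simps)
  also have "\<dots> = (\<Sum>j\<in>UNIV. \<Sum>k\<in>UNIV. (\<Sum>i\<in>UNIV. a i j)*(\<Sum>i\<in>UNIV. a i k) + (if j=k then 1 else -1))"
    by (simp only: h)
  also have "\<dots> = (\<Sum>i\<in>UNIV. \<Sum>j\<in>UNIV. a i j)^2 - 8"
    by (simp add: sum_4 power2_eq_square algebra_simps)
  finally show ?thesis by linarith
qed


lemma oddsq: fixes c :: int assumes "2*x - c*c = 1" shows "odd c"
proof -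
  have "c*c = 2*x - 1" using assms by linarith
  then have "odd (c*c)" by simp
  then show ?thesis by simp
qed

lemma oddsq2: fixes c :: int assumes "2*x - c*c = 1" shows "c = 2 * ((c - 1) div 2) + 1"
proof -
  have "odd c" using oddsq[OF assms] .
  then show ?thesis by presburger
qed

lemma core1:
  fixes r1 r2 r3 r4 k1 k2 k3 k4 :: int
  assumes "r1 = 2*k1+1" "r2 = 2*k2+1" "r3 = 2*k3+1" "r4 = 2*k4+1"
    and tot: "2*(r1^2+r2^2+r3^2+r4^2) - (r1+r2+r3+r4)^2 = -8"
  shows "4 dvd (r1+r2+r3+r4)"
proof -
  define t where "t = k1+k2+k3+k4+2"
  have ev: "\<exists>p. k * (k + 1) = 2 * p" for k :: int by (metis dvd_def even_mult_iff even_plus_one_iff)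
  obtain p1 p2 p3 p4 where e1: "k1 * (k1 + 1) = 2 * p1" and e2: "k2 * (k2 + 1) = 2 * p2"
    and e3: "k3 * (k3 + 1) = 2 * p3" and e4: "k4 * (k4 + 1) = 2 * p4" using ev by metis
  define q where "q = p1+p2+p3+p4"
  have St: "r1+r2+r3+r4 = 2*t" unfolding t_def using assms by simp
  have Sq: "r1^2+r2^2+r3^2+r4^2 = 4*(k1*(k1+1)) + 4*(k2*(k2+1)) + 4*(k3*(k3+1)) + 4*(k4*(k4+1)) + 4"
    using assms by (simp add: power2_eq_square algebra_simps)
  also have "\<dots> = 8*q+4" unfolding q_def e1 e2 e3 e4 by simp
  finally have "4 * t^2 = 16 * q + 16" using tot St by (simp add: power_mult_distrib)
  then have "t^2 = 4 * (q + 1)" by simp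
  then have "even (t^2)" by simp
  then have "even t" by simp
  then show ?thesis using St by auto
qed
lemma core2:
  fixes x11 x12 x13 x14 x21 x22 x23 x24 x31 x32 x33 x34 x41 x42 x43 x44 kr1 kr2 kr3 kr4 kc1 kc2 kc3 kc4 m :: int
  assumes "x11+x12+x13+x14 = 2*kr1+1" "x21+x22+x23+x24 = 2*kr2+1" "x31+x32+x33+x34 = 2*kr3+1" "x41+x42+x43+x44 = 2*kr4+1" "x11+x21+x31+x41 = 2*kc1+1" "x12+x22+x32+x42 = 2*kc2+1" "x13+x23+x33+x43 = 2*kc3+1" "x14+x24+x34+x44 = 2*kc4+1" "x11+x12+x13+x14+x21+x22+x23+x24+x31+x32+x33+x34+x41+x42+x43+x44 = 4*m"
  shows "4 dvd (x11 + x12 + x13 + x14 + x21 + x22 + x23 + x24 + x31 + x32 + x33 + x34 + x41 + x42 + x43 + x44)" and "4 dvd (x11 + x12 - x13 - x14 + x21 + x22 - x23 - x24 + x31 + x32 - x33 - x34 + x41 + x42 - x43 - x44)" and "4 dvd (x11 - x12 + x13 - x14 + x21 - x22 + x23 - x24 + x31 - x32 + x33 - x34 + x41 - x42 + x43 - x44)" and "4 dvd (x11 - x12 - x13 + x14 + x21 - x22 - x23 + x24 + x31 - x32 - x33 + x34 + x41 - x42 - x43 + x44)" and "4 dvd (x11 + x12 + x13 + x14 + x21 + x22 + x23 + x24 - x31 - x32 - x33 - x34 - x41 - x42 - x43 - x44)" and "4 dvd (x11 + x12 - x13 - x14 + x21 + x22 - x23 - x24 - x31 - x32 + x33 + x34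 - x41 - x42 + x43 + x44)" and "4 dvd (x11 - x12 + x13 - x14 + x21 - x22 + x23 - x24 - x31 + x32 - x33 + x34 - x41 + x42 - x43 + x44)" and "4 dvd (x11 - x12 - x13 + x14 + x21 - x22 - x23 + x24 - x31 + x32 + x33 - x34 - x41 + x42 + x43 - x44)" and "4 dvd (x11 + x12 + x13 + x14 - x21 - x22 - x23 - x24 + x31 + x32 + x33 + x34 - x41 - x42 - x43 - x44)" and "4 dvd (x11 + x12 - x13 - x14 - x21 - x22 + x23 + x24 + x31 + x32 - x33 - x34 - x41 - x42 + x43 + x44)" and "4 dvd (x11 - x12 + x13 - x14 - x21 + x22 - x23 + x24 + x31 - x32 + x33 - x34 - x41 + x42 - x43 + x44)" and "4 dvd (x11 - x12 - x13 + x14 - x21 + x22 + x23 - x24 + x31 - x32 - x33 + x34 - x41 + x42 + x43 - x44)" and "4 dvd (x11 + x12 + x13 + x14 - x21 - x22 - x23 - x24 - x31 - x32 - x33 - x34 + x41 + x42 + x43 + x44)" and "4 dvd (x11 + x12 - x13 - x14 - x21 - x22 + x23 + x24 - x31 - x32 + x33 + x34 + x41 + x42 - x43 - x44)" and "4 dvd (x11 - x12 + x13 - x14 - x21 + x22 - x23 + x24 - x31 + x32 - x33 + x34 + x41 - x42 + x43 - x44)" and "4 dvd (x11 - x12 - x13 + x14 - x21 + x22 + x23 - x24 - x31 + x32 + x33 - x34 + x41 - x42 - x43 + x44)"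
proof -
  have "x11 + x12 + x13 + x14 + x21 + x22 + x23 + x24 + x31 + x32 + x33 + x34 + x41 + x42 + x43 + x44 = 4 * (m)" using assms(9) by (smt (verit))
  then show "4 dvd (x11 + x12 + x13 + x14 + x21 + x22 + x23 + x24 + x31 + x32 + x33 + x34 + x41 + x42 + x43 + x44)" by (rule dvdI)
  have "x11 + x12 - x13 - x14 + x21 + x22 - x23 - x24 + x31 + x32 - x33 - x34 + x41 + x42 - x43 - x44 = 4 * (m - kc3 - kc4 - 1)" using assms(9) assms(7) assms(8) by (smt (verit))
  then show "4 dvd (x11 + x12 - x13 - x14 + x21 + x22 - x23 - x24 + x31 + x32 - x33 - x34 + x41 + x42 - x43 - x44)" by (rule dvdI)
  have "x11 - x12 + x13 - x14 + x21 - x22 + x23 - x24 + x31 - x32 + x33 - x34 + x41 - x42 + x43 - x44 = 4 * (m - kc2 - kc4 - 1)" using assms(9) assms(6) assms(8) by (smt (verit))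
  then show "4 dvd (x11 - x12 + x13 - x14 + x21 - x22 + x23 - x24 + x31 - x32 + x33 - x34 + x41 - x42 + x43 - x44)" by (rule dvdI)
  have "x11 - x12 - x13 + x14 + x21 - x22 - x23 + x24 + x31 - x32 - x33 + x34 + x41 - x42 - x43 + x44 = 4 * (m - kc2 - kc3 - 1)" using assms(9) assms(6) assms(7) by (smt (verit))
  then show "4 dvd (x11 - x12 - x13 + x14 + x21 - x22 - x23 + x24 + x31 - x32 - x33 + x34 + x41 - x42 - x43 + x44)" by (rule dvdI)
  have "x11 + x12 + x13 + x14 + x21 + x22 + x23 + x24 - x31 - x32 - x33 - x34 - x41 - x42 - x43 - x44 = 4 * (m - kr3 - kr4 - 1)" using assms(9) assms(3) assms(4) by (smt (verit))
  then show "4 dvd (x11 + x12 + x13 + x14 + x21 + x22 + x23 + x24 - x31 - x32 - x33 - x34 - x41 - x42 - x43 - x44)" by (rule dvdI)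
  have "x11 + x12 - x13 - x14 + x21 + x22 - x23 - x24 - x31 - x32 + x33 + x34 - x41 - x42 + x43 + x44 = 4 * (m - kr3 - kr4 - 1 - kc3 - kc4 - 1 + x33 + x34 + x43 + x44)" using assms(9) assms(3) assms(4) assms(7) assms(8) by (smt (verit))
  then show "4 dvd (x11 + x12 - x13 - x14 + x21 + x22 - x23 - x24 - x31 - x32 + x33 + x34 - x41 - x42 + x43 + x44)" by (rule dvdI)
  have "x11 - x12 + x13 - x14 + x21 - x22 + x23 - x24 - x31 + x32 - x33 + x34 - x41 + x42 - x43 + x44 = 4 * (m - kr3 - kr4 - 1 - kc2 - kc4 - 1 + x32 + x34 + x42 + x44)" using assms(9) assms(3) assms(4) assms(6) assms(8) by (smt (verit))
  then show "4 dvd (x11 - x12 + x13 - x14 + x21 - x22 + x23 - x24 - x31 + x32 - x33 + x34 - x41 + x42 - x43 + x44)" by (rule dvdI)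
  have "x11 - x12 - x13 + x14 + x21 - x22 - x23 + x24 - x31 + x32 + x33 - x34 - x41 + x42 + x43 - x44 = 4 * (m - kr3 - kr4 - 1 - kc2 - kc3 - 1 + x32 + x33 + x42 + x43)" using assms(9) assms(3) assms(4) assms(6) assms(7) by (smt (verit))
  then show "4 dvd (x11 - x12 - x13 + x14 + x21 - x22 - x23 + x24 - x31 + x32 + x33 - x34 - x41 + x42 + x43 - x44)" by (rule dvdI)
  have "x11 + x12 + x13 + x14 - x21 - x22 - x23 - x24 + x31 + x32 + x33 + x34 - x41 - x42 - x43 - x44 = 4 * (m - kr2 - kr4 - 1)" using assms(9) assms(2) assms(4) by (smt (verit))
  then show "4 dvd (x11 + x12 + x13 + x14 - x21 - x22 - x23 - x24 + x31 + x32 + x33 + x34 - x41 - x42 - x43 - x44)" by (rule dvdI)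
  have "x11 + x12 - x13 - x14 - x21 - x22 + x23 + x24 + x31 + x32 - x33 - x34 - x41 - x42 + x43 + x44 = 4 * (m - kr2 - kr4 - 1 - kc3 - kc4 - 1 + x23 + x24 + x43 + x44)" using assms(9) assms(2) assms(4) assms(7) assms(8) by (smt (verit))
  then show "4 dvd (x11 + x12 - x13 - x14 - x21 - x22 + x23 + x24 + x31 + x32 - x33 - x34 - x41 - x42 + x43 + x44)" by (rule dvdI)
  have "x11 - x12 + x13 - x14 - x21 + x22 - x23 + x24 + x31 - x32 + x33 - x34 - x41 + x42 - x43 + x44 = 4 * (m - kr2 - kr4 - 1 - kc2 - kc4 - 1 + x22 + x24 + x42 + x44)" using assms(9) assms(2) assms(4) assms(6) assms(8) by (smt (verit))
  then show "4 dvd (x11 - x12 + x13 - x14 - x21 + x22 - x23 + x24 + x31 - x32 + x33 - x34 - x41 + x42 - x43 + x44)" by (rule dvdI)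
  have "x11 - x12 - x13 + x14 - x21 + x22 + x23 - x24 + x31 - x32 - x33 + x34 - x41 + x42 + x43 - x44 = 4 * (m - kr2 - kr4 - 1 - kc2 - kc3 - 1 + x22 + x23 + x42 + x43)" using assms(9) assms(2) assms(4) assms(6) assms(7) by (smt (verit))
  then show "4 dvd (x11 - x12 - x13 + x14 - x21 + x22 + x23 - x24 + x31 - x32 - x33 + x34 - x41 + x42 + x43 - x44)" by (rule dvdI)
  have "x11 + x12 + x13 + x14 - x21 - x22 - x23 - x24 - x31 - x32 - x33 - x34 + x41 + x42 + x43 + x44 = 4 * (m - kr2 - kr3 - 1)" using assms(9) assms(2) assms(3) by (smt (verit))
  then show "4 dvd (x11 + x12 + x13 + x14 - x21 - x22 - x23 - x24 - x31 - x32 - x33 - x34 + x41 + x42 + x43 + x44)" by (rule dvdI)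
  have "x11 + x12 - x13 - x14 - x21 - x22 + x23 + x24 - x31 - x32 + x33 + x34 + x41 + x42 - x43 - x44 = 4 * (m - kr2 - kr3 - 1 - kc3 - kc4 - 1 + x23 + x24 + x33 + x34)" using assms(9) assms(2) assms(3) assms(7) assms(8) by (smt (verit))
  then show "4 dvd (x11 + x12 - x13 - x14 - x21 - x22 + x23 + x24 - x31 - x32 + x33 + x34 + x41 + x42 - x43 - x44)" by (rule dvdI)
  have "x11 - x12 + x13 - x14 - x21 + x22 - x23 + x24 - x31 + x32 - x33 + x34 + x41 - x42 + x43 - x44 = 4 * (m - kr2 - kr3 - 1 - kc2 - kc4 - 1 + x22 + x24 + x32 + x34)" using assms(9) assms(2) assms(3) assms(6) assms(8) by (smt (verit))
  then show "4 dvd (x11 - x12 + x13 - x14 - x21 + x22 - x23 + x24 - x31 + x32 - x33 + x34 + x41 - x42 + x43 - x44)" by (rule dvdI)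
  have "x11 - x12 - x13 + x14 - x21 + x22 + x23 - x24 - x31 + x32 + x33 - x34 + x41 - x42 - x43 + x44 = 4 * (m - kr2 - kr3 - 1 - kc2 - kc3 - 1 + x22 + x23 + x32 + x33)" using assms(9) assms(2) assms(3) assms(6) assms(7) by (smt (verit))
  then show "4 dvd (x11 - x12 - x13 + x14 - x21 + x22 + x23 - x24 - x31 + x32 + x33 - x34 + x41 - x42 - x43 + x44)" by (rule dvdI)
qed

lemma int_part:
  fixes a :: "4 \<Rightarrow> 4 \<Rightarrow> int"
  assumes col: "\<And>j k. 2*(\<Sum>i\<in>UNIV. a i j * a i k) - (\<Sum>i\<in>UNIV. a i j)*(\<Sum>i\<in>UNIV. a i k) = (if j=k then 1 else -1)"
  and row: "\<And>i. 2*(\<Sum>j\<in>UNIV. a i j * a i j) - (\<Sum>j\<in>UNIV. a i j)*(\<Sum>j\<in>UNIV. a i j) = 1"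
  shows "4 dvd (\<Sum>i\<in>UNIV. \<Sum>j\<in>UNIV. hd4 x i * a i j * hd4 j y)"
proof -
  define kr where "kr i = ((\<Sum>j\<in>UNIV. a i j) - 1) div 2" for i
  define kc where "kc j = ((\<Sum>i\<in>UNIV. a i j) - 1) div 2" for j
  have rr: "(\<Sum>j\<in>UNIV. a i j) = 2 * kr i + 1" for i
    using oddsq2[OF row[of i]] unfolding kr_def .
  have cc: "(\<Sum>i\<in>UNIV. a i j) = 2 * kc j + 1" for j
    using oddsq2[of _ "\<Sum>i\<in>UNIV. a i j"] col[of j j] unfolding kc_def by simp
  have tot: "2*(\<Sum>i\<in>UNIV. (\<Sum>j\<in>UNIV. a i j)^2) - (\<Sum>i\<in>UNIV. \<Sum>j\<in>UNIV. a i j)^2 = -8"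
    using total[of a] col by blast
  have tot': "2*((\<Sum>j\<in>UNIV. a 1 j)^2+(\<Sum>j\<in>UNIV. a 2 j)^2+(\<Sum>j\<in>UNIV. a 3 j)^2+(\<Sum>j\<in>UNIV. a 4 j)^2)
     - ((\<Sum>j\<in>UNIV. a 1 j)+(\<Sum>j\<in>UNIV. a 2 j)+(\<Sum>j\<in>UNIV. a 3 j)+(\<Sum>j\<in>UNIV. a 4 j))^2 = -8"
    using tot unfolding sum_4 .
  have "4 dvd ((\<Sum>j\<in>UNIV. a 1 j)+(\<Sum>j\<in>UNIV. a 2 j)+(\<Sum>j\<in>UNIV. a 3 j)+(\<Sum>j\<in>UNIV. a 4 j))"
    by (rule core1[OF rr[of 1] rr[of 2] rr[of 3] rr[of 4] tot'])
  then obtain m where SS: "(\<Sum>j\<in>UNIV. a 1 j)+(\<Sum>j\<in>UNIV. a 2 j)+(\<Sum>j\<in>UNIV. a 3 j)+(\<Sum>j\<in>UNIV. a 4 j) = 4*m" by blast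
  have rr4: "a i 1 + a i 2 + a i 3 + a i 4 = 2 * kr i + 1" for i using rr[of i] unfolding sum_4 .
  have cc4: "a 1 j + a 2 j + a 3 j + a 4 j = 2 * kc j + 1" for j using cc[of j] unfolding sum_4 .
  have SS4: "a 1 1+a 1 2+a 1 3+a 1 4+a 2 1+a 2 2+a 2 3+a 2 4+a 3 1+a 3 2+a 3 3+a 3 4+a 4 1+a 4 2+a 4 3+a 4 4 = 4*m" using SS unfolding sum_4 by (simp add: add.assoc)
  note C = core2[OF rr4[of 1] rr4[of 2] rr4[of 3] rr4[of 4] cc4[of 1] cc4[of 2] cc4[of 3] cc4[of 4] SS4]
  define X where "X x y = (\<Sum>i\<in>UNIV. \<Sum>j\<in>UNIV. hd4 x i * a i j * hd4 j y)" for x y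
  have c11: "4 dvd X 1 1"
  proof -
    have "X 1 1 = a 1 1 + a 1 2 + a 1 3 + a 1 4 + a 2 1 + a 2 2 + a 2 3 + a 2 4 + a 3 1 + a 3 2 + a 3 3 + a 3 4 + a 4 1 + a 4 2 + a 4 3 + a 4 4" unfolding X_def sum_4 hd4_def by simp
    then show ?thesis using C(1) by simp
  qed
  have c12: "4 dvd X 1 2"
  proof -
    have "X 1 2 = a 1 1 + a 1 2 - a 1 3 - a 1 4 + a 2 1 + a 2 2 - a 2 3 - a 2 4 + a 3 1 + a 3 2 - a 3 3 - a 3 4 + a 4 1 + a 4 2 - a 4 3 - a 4 4" unfolding X_def sum_4 hd4_def by simp
    then show ?thesis using C(2) by simp
  qed
  have c13: "4 dvd X 1 3"
  proof -
    have "X 1 3 = a 1 1 - a 1 2 + a 1 3 - a 1 4 + a 2 1 - a 2 2 + a 2 3 - a 2 4 + a 3 1 - a 3 2 + a 3 3 - a 3 4 + a 4 1 - a 4 2 + a 4 3 - a 4 4" unfolding X_def sum_4 hd4_def by simp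
    then show ?thesis using C(3) by simp
  qed
  have c14: "4 dvd X 1 4"
  proof -
    have "X 1 4 = a 1 1 - a 1 2 - a 1 3 + a 1 4 + a 2 1 - a 2 2 - a 2 3 + a 2 4 + a 3 1 - a 3 2 - a 3 3 + a 3 4 + a 4 1 - a 4 2 - a 4 3 + a 4 4" unfolding X_def sum_4 hd4_def by simp
    then show ?thesis using C(4) by simp
  qed
  have c21: "4 dvd X 2 1"
  proof -
    have "X 2 1 = a 1 1 + a 1 2 + a 1 3 + a 1 4 + a 2 1 + a 2 2 + a 2 3 + a 2 4 - a 3 1 - a 3 2 - a 3 3 - a 3 4 - a 4 1 - a 4 2 - a 4 3 - a 4 4" unfolding X_def sum_4 hd4_def by simp
    then show ?thesis using C(5) by simp
  qed
  have c22: "4 dvd X 2 2"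
  proof -
    have "X 2 2 = a 1 1 + a 1 2 - a 1 3 - a 1 4 + a 2 1 + a 2 2 - a 2 3 - a 2 4 - a 3 1 - a 3 2 + a 3 3 + a 3 4 - a 4 1 - a 4 2 + a 4 3 + a 4 4" unfolding X_def sum_4 hd4_def by simp
    then show ?thesis using C(6) by simp
  qed
  have c23: "4 dvd X 2 3"
  proof -
    have "X 2 3 = a 1 1 - a 1 2 + a 1 3 - a 1 4 + a 2 1 - a 2 2 + a 2 3 - a 2 4 - a 3 1 + a 3 2 - a 3 3 + a 3 4 - a 4 1 + a 4 2 - a 4 3 + a 4 4" unfolding X_def sum_4 hd4_def by simp
    then show ?thesis using C(7) by simp
  qed
  have c24: "4 dvd X 2 4"
  proof -
    have "X 2 4 = a 1 1 - a 1 2 - a 1 3 + a 1 4 + a 2 1 - a 2 2 - a 2 3 + a 2 4 - a 3 1 + a 3 2 + a 3 3 - a 3 4 - a 4 1 + a 4 2 + a 4 3 - a 4 4" unfolding X_def sum_4 hd4_def by simp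
    then show ?thesis using C(8) by simp
  qed
  have c31: "4 dvd X 3 1"
  proof -
    have "X 3 1 = a 1 1 + a 1 2 + a 1 3 + a 1 4 - a 2 1 - a 2 2 - a 2 3 - a 2 4 + a 3 1 + a 3 2 + a 3 3 + a 3 4 - a 4 1 - a 4 2 - a 4 3 - a 4 4" unfolding X_def sum_4 hd4_def by simp
    then show ?thesis using C(9) by simp
  qed
  have c32: "4 dvd X 3 2"
  proof -
    have "X 3 2 = a 1 1 + a 1 2 - a 1 3 - a 1 4 - a 2 1 - a 2 2 + a 2 3 + a 2 4 + a 3 1 + a 3 2 - a 3 3 - a 3 4 - a 4 1 - a 4 2 + a 4 3 + a 4 4" unfolding X_def sum_4 hd4_def by simp
    then show ?thesis using C(10) by simp
  qed
  have c33: "4 dvd X 3 3"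
  proof -
    have "X 3 3 = a 1 1 - a 1 2 + a 1 3 - a 1 4 - a 2 1 + a 2 2 - a 2 3 + a 2 4 + a 3 1 - a 3 2 + a 3 3 - a 3 4 - a 4 1 + a 4 2 - a 4 3 + a 4 4" unfolding X_def sum_4 hd4_def by simp
    then show ?thesis using C(11) by simp
  qed
  have c34: "4 dvd X 3 4"
  proof -
    have "X 3 4 = a 1 1 - a 1 2 - a 1 3 + a 1 4 - a 2 1 + a 2 2 + a 2 3 - a 2 4 + a 3 1 - a 3 2 - a 3 3 + a 3 4 - a 4 1 + a 4 2 + a 4 3 - a 4 4" unfolding X_def sum_4 hd4_def by simp
    then show ?thesis using C(12) by simp
  qed
  have c41: "4 dvd X 4 1"
  proof -
    have "X 4 1 = a 1 1 + a 1 2 + a 1 3 + a 1 4 - a 2 1 - a 2 2 - a 2 3 - a 2 4 - a 3 1 - a 3 2 - a 3 3 - a 3 4 + a 4 1 + a 4 2 + a 4 3 + a 4 4" unfolding X_def sum_4 hd4_def by simp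
    then show ?thesis using C(13) by simp
  qed
  have c42: "4 dvd X 4 2"
  proof -
    have "X 4 2 = a 1 1 + a 1 2 - a 1 3 - a 1 4 - a 2 1 - a 2 2 + a 2 3 + a 2 4 - a 3 1 - a 3 2 + a 3 3 + a 3 4 + a 4 1 + a 4 2 - a 4 3 - a 4 4" unfolding X_def sum_4 hd4_def by simp
    then show ?thesis using C(14) by simp
  qed
  have c43: "4 dvd X 4 3"
  proof -
    have "X 4 3 = a 1 1 - a 1 2 + a 1 3 - a 1 4 - a 2 1 + a 2 2 - a 2 3 + a 2 4 - a 3 1 + a 3 2 - a 3 3 + a 3 4 + a 4 1 - a 4 2 + a 4 3 - a 4 4" unfolding X_def sum_4 hd4_def by simp
    then show ?thesis using C(15) by simp
  qed
  have c44: "4 dvd X 4 4"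
  proof -
    have "X 4 4 = a 1 1 - a 1 2 - a 1 3 + a 1 4 - a 2 1 + a 2 2 + a 2 3 - a 2 4 - a 3 1 + a 3 2 + a 3 3 - a 3 4 + a 4 1 - a 4 2 - a 4 3 + a 4 4" unfolding X_def sum_4 hd4_def by simp
    then show ?thesis using C(16) by simp
  qed
  have "\<forall>x y. 4 dvd X x y"
    unfolding forall_4 using c11 c12 c13 c14 c21 c22 c23 c24 c31 c32 c33 c34 c41 c42 c43 c44
    by blast
  then show ?thesis unfolding X_def by blast
qed

lemma QQ: "Q_D ** Q_D = mat 1"
  by (simp add: vec_eq_iff matrix_matrix_mult_def mat_def Q_D_def sum_4 forall_4)

lemma JJ: "J0 ** J0 = mat 1"
  by (simp add: vec_eq_iff matrix_matrix_mult_def mat_def J0_def sum_4 forall_4)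

lemma Jinv: "matrix_inv J0 = J0"
proof -
  have ex: "\<exists>A'. J0 ** A' = mat 1 \<and> A' ** J0 = mat 1" using JJ by blast
  define B where "B = matrix_inv J0"
  have B: "J0 ** B = mat 1 \<and> B ** J0 = mat 1"
    unfolding B_def matrix_inv_def by (rule someI_ex[OF ex])
  have "B = B ** (J0 ** J0)" by (simp add: JJ)
  also have "\<dots> = (B ** J0) ** J0" by (simp add: matrix_mul_assoc)
  also have "\<dots> = J0" using B by simp
  finally show ?thesis unfolding B_def .
qed

lemma JT: "transpose J0 = J0"
  by (simp add: vec_eq_iff transpose_def J0_def forall_4)

lemma JQJ: "J0 ** Q_D ** J0 = Q_L"
  by (simp add: vec_eq_iff matrix_matrix_mult_def Q_L_def J0_def Q_D_def sum_4 forall_4)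

lemma entry1: "(transpose M ** Q_D ** M)$j$k = (\<Sum>i\<in>UNIV. M$i$j * M$i$k) - (\<Sum>i\<in>UNIV. M$i$j)*(\<Sum>i\<in>UNIV. M$i$k)/2"
  by (simp add: matrix_matrix_mult_def transpose_def Q_D_def sum_4 field_simps)

lemma entry2: "(M ** Q_D ** transpose M)$i$k = (\<Sum>j\<in>UNIV. M$i$j * M$k$j) - (\<Sum>j\<in>UNIV. M$i$j)*(\<Sum>j\<in>UNIV. M$k$j)/2"
  by (simp add: matrix_matrix_mult_def transpose_def Q_D_def sum_4 field_simps)

lemma J0e: "J0$i$j = real_of_int (hd4 i j) / 2"
  by (simp add: J0_def hd4_def)

lemma JUJ: "(J0 ** M ** J0)$x$y = (\<Sum>i\<in>UNIV. \<Sum>j\<in>UNIV. real_of_int (hd4 x i) * M$i$j * real_of_int (hd4 j y)) / 4"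
  by (simp add: matrix_matrix_mult_def J0e sum_4 algebra_simps)


theorem lemma7p2:
  assumes "U \<in> Aut_QD_Z"
  shows "int_matrix (matrix_inv J0 ** U ** J0) \<and> matrix_inv J0 ** U ** J0 \<in> O31_Z"
proof -
  have Ui: "int_matrix U" and UQ: "transpose U ** Q_D ** U = Q_D"
    using assms unfolding Aut_QD_Z_def by auto
  have "(Q_D ** transpose U ** Q_D) ** U = Q_D ** (transpose U ** Q_D ** U)"
    by (simp add: matrix_mul_assoc)
  also have "\<dots> = mat 1" using UQ QQ by simp
  finally have "U ** (Q_D ** transpose U ** Q_D) = mat 1"
    using matrix_left_right_inverse by blast
  note eq = this
  have "U ** Q_D ** transpose U = U ** Q_D ** transpose U ** (Q_D ** Q_D)"
    by (simp only: QQ matrix_mul_rid)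
  also have "\<dots> = (U ** (Q_D ** transpose U ** Q_D)) ** Q_D"
    by (simp only: matrix_mul_assoc)
  also have "\<dots> = Q_D" by (simp only: eq matrix_mul_lid)
  finally have UQ2: "U ** Q_D ** transpose U = Q_D" .
  define a where "a i j = \<lfloor>U$i$j\<rfloor>" for i j
  have Ua: "U$i$j = real_of_int (a i j)" for i j
    using Ui unfolding int_matrix_def a_def by (metis Ints_cases floor_of_int)
  have col: "2*(\<Sum>i\<in>UNIV. a i j * a i k) - (\<Sum>i\<in>UNIV. a i j)*(\<Sum>i\<in>UNIV. a i k) = (if j=k then 1 else -1)" for j k
  proof -
    have "real_of_int (2*(\<Sum>i\<in>UNIV. a i j * a i k) - (\<Sum>i\<in>UNIV. a i j)*(\<Sum>i\<in>UNIV. a i k))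
       = 2 * ((transpose U ** Q_D ** U)$j$k)"
      unfolding entry1 by (simp add: Ua)
    also have "\<dots> = real_of_int (if j=k then 1 else -1)"
      unfolding UQ by (simp add: Q_D_def)
    finally show ?thesis by (simp only: of_int_eq_iff)
  qed
  have row: "2*(\<Sum>j\<in>UNIV. a i j * a i j) - (\<Sum>j\<in>UNIV. a i j)*(\<Sum>j\<in>UNIV. a i j) = 1" for i
  proof -
    have "real_of_int (2*(\<Sum>j\<in>UNIV. a i j * a i j) - (\<Sum>j\<in>UNIV. a i j)*(\<Sum>j\<in>UNIV. a i j))
       = 2 * ((U ** Q_D ** transpose U)$i$i)"
      unfolding entry2 by (simp add: Ua)
    also have "\<dots> = real_of_int 1"
      unfolding UQ2 by (simp add: Q_D_def)
    finally show ?thesis by (simp only: of_int_eq_iff)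
  qed
  have intV: "int_matrix (J0 ** U ** J0)"
    unfolding int_matrix_def
  proof (intro allI)
    fix x y
    obtain w where w: "(\<Sum>i\<in>UNIV. \<Sum>j\<in>UNIV. hd4 x i * a i j * hd4 j y) = 4 * w"
      using int_part[OF col row, of x y] by blast
    have "(J0 ** U ** J0)$x$y = real_of_int (\<Sum>i\<in>UNIV. \<Sum>j\<in>UNIV. hd4 x i * a i j * hd4 j y) / 4"
      unfolding JUJ by (simp add: Ua)
    also have "\<dots> = real_of_int w" unfolding w by simp
    finally show "(J0 ** U ** J0)$x$y \<in> \<int>" by simp
  qed
  have JQLJ: "J0 ** Q_L ** J0 = Q_D"
  proof -
    have "J0 ** Q_L ** J0 = (J0 ** J0) ** Q_D ** (J0 ** J0)"
      unfolding JQJ[symmetric] by (simp only: matrix_mul_assoc)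
    then show ?thesis by (simp only: JJ matrix_mul_lid matrix_mul_rid)
  qed
  have "transpose (J0 ** U ** J0) ** Q_L ** (J0 ** U ** J0) = J0 ** (transpose U ** (J0 ** Q_L ** J0) ** U) ** J0"
    by (simp add: matrix_transpose_mul JT matrix_mul_assoc)
  also have "\<dots> = Q_L" unfolding JQLJ UQ JQJ ..
  finally have "transpose (J0 ** U ** J0) ** Q_L ** (J0 ** U ** J0) = Q_L" .
  then show ?thesis using intV unfolding Jinv O31_Z_def by simp
qed

end
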